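(* Let $\{M_p\mid p\in P\}$ be a Morse decomposition of a multivector field on a finite simplicial complex $K$, and let $\sigma_1,\dots,\sigma_n$ and $\sigma'_1,\dots,\sigma'_n$ be two admissible enumerations of $K$ which are Morse fixed, i.e. for every $p\in P$ the orders they induce on $M_p$ coincide. Let $A$ and $A'$ be the corresponding filtered boundary matrices and $A_{out}$, $A'_{out}$ the matrices produced by the reduction phase of ConMat on $A$ and $A'$. Then $A_{out}[i,j]=A'_{out}[i',j']$ whenever $\sigma_i=\sigma'_{i'}$ and $\sigma_j=\sigma'_{j'}$. Furthermore, if $j$ is a homogeneous column of $A_{out}$ with pivot row $\ell$, and $\sigma'_{j'}=\sigma_j$, $\sigma'_{\ell'}=\sigma_\ell$, then $j'$ is a homogeneous column of $A'_{out}$ with pivot row $\ell'$.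
   Context: $K$ is a finite simplicial complex ($\tau\le\sigma$: $\tau$ is a face of $\sigma$; $\mathrm{cl}(\sigma)=\{\tau:\tau\le\sigma\}$). A multivector field $\mathcal V$ on $K$ is a partition of $K$ into convex sets $V$ (if $\sigma,\tau\in V$ and $\sigma\le\mu\le\tau$ then $\mu\in V$); $[\sigma]_{\mathcal V}$ is the part containing $\sigma$, $F_{\mathcal V}(\sigma)=[\sigma]_{\mathcal V}\cup\mathrm{cl}(\sigma)$, and a path is a sequence $\sigma_1,\dots,\sigma_r$ with $\sigma_k\in F_{\mathcal V}(\sigma_{k-1})$. A Morse decomposition indexed by a finite poset $(P,\le_P)$ is a partition $K=\bigsqcup_{p\in P}M_p$ such that every path from $M_p$ to $M_q$ has $q\le_P p$; $[\sigma]_P$ is the $p$ with $\sigma\in M_p$. An admissible enumeration is $\sigma_1,\dots,\sigma_n$ of all simplices of $K$ such that (a) for some linear extension $\le_{lin}$ of $\le_P$, $i\le j\Rightarrow[\sigma_i]_P\le_{lin}[\sigma_j]_P$; (b) if $\sigma_i$ is a proper face of $\sigma_j$ then $i<j$. Different admissible enumerations may use different linear extensions. The filtered boundary matrix is the $n\times n$ $\mathbb Z_2$-matrix with entry $(i,j)$ equal to $1$ iff $\sigma_i$ is a codimension-one face of $\sigma_j$; row/column $i$ represents $\sigma_i$. For a nonzero column $j$ of a matrix $B$, its pivot row $\mathrm{low}_B(j)$ is the largest $i$ with $B[i,j]=1$; column $j$ is homogeneous if nonzero and $\sigma_j$, $\sigma_{\mathrm{low}_B(j)}$ are in the same Morse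 set. ConMat reduction phase on $A$ (in place): for $j=1,\dots,n$: for $i=\mathrm{low}_A(j)$ down to $1$: if $A[i,j]=1$ and some column $s<j$ of the current matrix is homogeneous with $\mathrm{low}_A(s)=i$, add column $s$ to column $j$ (mod 2). The result is $A_{out}$. *)

theory Defs
  imports Main
begin

definition simplicial_complex :: "'v set set \<Rightarrow> bool" where
  "simplicial_complex K \<longleftrightarrow> finite K \<and>
     (\<forall>\<sigma>\<in>K. finite \<sigma> \<and> \<sigma> \<noteq> {} \<and> (\<forall>\<tau>. \<tau> \<subseteq> \<sigma> \<and> \<tau> \<noteq> {} \<longrightarrow> \<tau> \<in> K))"

definition convex_in :: "'v set set \<Rightarrow> bool" where
  "convex_in X \<longleftrightarrow> (\<forall>\<sigma>\<in>X. \<forall>\<tau>\<in>X. \<forall>\<mu>. \<sigma> \<subseteq> \<mu> \<and> \<mu> \<subseteq> \<tau> \<longrightarrow> \<mu> \<in> X)"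

definition multivector_field :: "'v set set \<Rightarrow> 'v set set set \<Rightarrow> bool" where
  "multivector_field K V \<longleftrightarrow>
     (\<forall>X\<in>V. X \<noteq> {} \<and> convex_in X) \<and> \<Union>V = K \<and>
     (\<forall>X\<in>V. \<forall>Y\<in>V. X \<noteq> Y \<longrightarrow> X \<inter> Y = {})"

definition in_F :: "'v set set \<Rightarrow> 'v set set set \<Rightarrow> 'v set \<Rightarrow> 'v set \<Rightarrow> bool" where
  "in_F K V \<sigma> \<tau> \<longleftrightarrow> (\<exists>X\<in>V. \<sigma> \<in> X \<and> \<tau> \<in> X) \<or> (\<tau> \<in> K \<and> \<tau> \<subseteq> \<sigma>)"

definition is_path :: "'v set set \<Rightarrow> 'v set set set \<Rightarrow> 'v set list \<Rightarrow> bool" where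
  "is_path K V ps \<longleftrightarrow> ps \<noteq> [] \<and> set ps \<subseteq> K \<and>
     (\<forall>k. Suc k < length ps \<longrightarrow> in_F K V (ps ! k) (ps ! Suc k))"

definition partial_order_pred :: "'p set \<Rightarrow> ('p \<Rightarrow> 'p \<Rightarrow> bool) \<Rightarrow> bool" where
  "partial_order_pred P le \<longleftrightarrow>
     (\<forall>p\<in>P. le p p) \<and> (\<forall>p\<in>P. \<forall>q\<in>P. le p q \<and> le q p \<longrightarrow> p = q) \<and>
     (\<forall>p\<in>P. \<forall>q\<in>P. \<forall>r\<in>P. le p q \<and> le q r \<longrightarrow> le p r)"

definition linear_extension :: "'p set \<Rightarrow> ('p \<Rightarrow> 'p \<Rightarrow> bool) \<Rightarrow> ('p \<Rightarrow> 'p \<Rightarrow> bool) \<Rightarrow> bool" where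
  "linear_extension P le lin \<longleftrightarrow> partial_order_pred P lin \<and>
     (\<forall>p\<in>P. \<forall>q\<in>P. lin p q \<or> lin q p) \<and> (\<forall>p\<in>P. \<forall>q\<in>P. le p q \<longrightarrow> lin p q)"

definition morse_decomposition ::
  "'v set set \<Rightarrow> 'v set set set \<Rightarrow> 'p set \<Rightarrow> ('p \<Rightarrow> 'p \<Rightarrow> bool) \<Rightarrow> ('p \<Rightarrow> 'v set set) \<Rightarrow> bool" where
  "morse_decomposition K V P le M \<longleftrightarrow>
     finite P \<and> partial_order_pred P le \<and>
     (\<Union>p\<in>P. M p) = K \<and> (\<forall>p\<in>P. \<forall>q\<in>P. p \<noteq> q \<longrightarrow> M p \<inter> M q = {}) \<and>
     (\<forall>p\<in>P. \<forall>q\<in>P. \<forall>ps. is_path K V ps \<and> hd ps \<in> M p \<and> last ps \<in> M q \<longrightarrow> le q p)"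

text \<open>Enumerations are lists, indices are 0-based.\<close>
definition admissible_enum ::
  "'v set set \<Rightarrow> 'p set \<Rightarrow> ('p \<Rightarrow> 'p \<Rightarrow> bool) \<Rightarrow> ('p \<Rightarrow> 'v set set) \<Rightarrow> 'v set list \<Rightarrow> bool" where
  "admissible_enum K P le M es \<longleftrightarrow> distinct es \<and> set es = K \<and>
     (\<exists>lin. linear_extension P le lin \<and>
        (\<forall>i<length es. \<forall>j<length es. \<forall>p\<in>P. \<forall>q\<in>P.
           i \<le> j \<and> es ! i \<in> M p \<and> es ! j \<in> M q \<longrightarrow> lin p q)) \<and>
     (\<forall>i<length es. \<forall>j<length es. es ! i \<subset> es ! j \<longrightarrow> i < j)"

definition morse_fixed ::
  "'p set \<Rightarrow> ('p \<Rightarrow> 'v set set) \<Rightarrow> 'v set list \<Rightarrow> 'v set list \<Rightarrow> bool" where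
  "morse_fixed P M es es' \<longleftrightarrow>
     (\<forall>p\<in>P. \<forall>i<length es. \<forall>j<length es. \<forall>i'<length es'. \<forall>j'<length es'.
        es ! i \<in> M p \<and> es ! j \<in> M p \<and> es' ! i' = es ! i \<and> es' ! j' = es ! j
        \<longrightarrow> (i < j \<longleftrightarrow> i' < j'))"

text \<open>Z_2 matrices as boolean functions on 0-based indices.\<close>
type_synonym mat2 = "nat \<Rightarrow> nat \<Rightarrow> bool"

definition boundary_matrix :: "'v set list \<Rightarrow> mat2" where
  "boundary_matrix es = (\<lambda>i j. i < length es \<and> j < length es \<and>
      es ! i \<subseteq> es ! j \<and> card (es ! i) + 1 = card (es ! j))"

definition nonzero_col :: "nat \<Rightarrow> mat2 \<Rightarrow> nat \<Rightarrow> bool" where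
  "nonzero_col n A j \<longleftrightarrow> (\<exists>i<n. A i j)"

definition low :: "nat \<Rightarrow> mat2 \<Rightarrow> nat \<Rightarrow> nat" where
  "low n A j = Max {i. i < n \<and> A i j}"

definition homogeneous ::
  "'p set \<Rightarrow> ('p \<Rightarrow> 'v set set) \<Rightarrow> 'v set list \<Rightarrow> mat2 \<Rightarrow> nat \<Rightarrow> bool" where
  "homogeneous P M es A j \<longleftrightarrow> nonzero_col (length es) A j \<and>
     (\<exists>p\<in>P. es ! j \<in> M p \<and> es ! (low (length es) A j) \<in> M p)"

definition add_col :: "mat2 \<Rightarrow> nat \<Rightarrow> nat \<Rightarrow> mat2" where
  "add_col A s j = (\<lambda>r c. if c = j then A r j \<noteq> A r s else A r c)"

text \<open>Inner loop: \<open>red_rows \<dots> j A (Suc i)\<close> processes rows i, i-1, ..., 0 of column j.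
  If several candidate columns s exist, the least one is taken (in fact at most one exists).\<close>
fun red_rows ::
  "'p set \<Rightarrow> ('p \<Rightarrow> 'v set set) \<Rightarrow> 'v set list \<Rightarrow> nat \<Rightarrow> mat2 \<Rightarrow> nat \<Rightarrow> mat2" where
  "red_rows P M es j A 0 = A"
| "red_rows P M es j A (Suc i) =
     red_rows P M es j
       (if A i j \<and> (\<exists>s<j. homogeneous P M es A s \<and> low (length es) A s = i)
        then add_col A (LEAST s. s < j \<and> homogeneous P M es A s \<and> low (length es) A s = i) j
        else A) i"

definition red_col ::
  "'p set \<Rightarrow> ('p \<Rightarrow> 'v set set) \<Rightarrow> 'v set list \<Rightarrow> mat2 \<Rightarrow> nat \<Rightarrow> mat2" where
  "red_col P M es A j =
     (if nonzero_col (length es) A j then red_rows P M es j A (Suc (low (length es) A j)) else A)"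

fun red_cols ::
  "'p set \<Rightarrow> ('p \<Rightarrow> 'v set set) \<Rightarrow> 'v set list \<Rightarrow> mat2 \<Rightarrow> nat \<Rightarrow> mat2" where
  "red_cols P M es A 0 = A"
| "red_cols P M es A (Suc j) = red_col P M es (red_cols P M es A j) j"

definition conmat_reduce ::
  "'p set \<Rightarrow> ('p \<Rightarrow> 'v set set) \<Rightarrow> 'v set list \<Rightarrow> mat2" where
  "conmat_reduce P M es = red_cols P M es (boundary_matrix es) (length es)"

end

theory Submission
  imports Defs
begin


definition mle :: "'p set \<Rightarrow> ('p \<Rightarrow> 'p \<Rightarrow> bool) \<Rightarrow> ('p \<Rightarrow> 'v set set) \<Rightarrow> 'v set \<Rightarrow> 'v set \<Rightarrow> bool" where
  "mle P le M x y \<longleftrightarrow> (\<exists>p\<in>P. \<exists>q\<in>P. x \<in> M p \<and> y \<in> M q \<and> le p q)"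

definition sm :: "'p set \<Rightarrow> ('p \<Rightarrow> 'v set set) \<Rightarrow> 'v set \<Rightarrow> 'v set \<Rightarrow> bool" where
  "sm P M x y \<longleftrightarrow> (\<exists>p\<in>P. x \<in> M p \<and> y \<in> M p)"

lemma md_disj: "morse_decomposition K V P le M \<Longrightarrow> p\<in>P \<Longrightarrow> q\<in>P \<Longrightarrow> x\<in>M p \<Longrightarrow> x\<in>M q \<Longrightarrow> p = q"
  unfolding morse_decomposition_def by blast

lemma md_po: "morse_decomposition K V P le M \<Longrightarrow> partial_order_pred P le"
  by (simp add: morse_decomposition_def)

lemma mle_trans:
  assumes md: "morse_decomposition K V P le M" and "mle P le M x y" "mle P le M y z"
  shows "mle P le M x z"
proof -
  from assms(2) obtain p q where a: "p\<in>P" "q\<in>P" "x\<in>M p" "y\<in>M q" "le p q" unfolding mle_def by blast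
  from assms(3) obtain q2 r where b: "q2\<in>P" "r\<in>P" "y\<in>M q2" "z\<in>M r" "le q2 r" unfolding mle_def by blast
  have "q = q2" using md_disj[OF md] a b by blast
  then have "le p r" using md_po[OF md] a b unfolding partial_order_pred_def by blast
  thus ?thesis unfolding mle_def using a b by blast
qed

lemma sm_mle:
  assumes md: "morse_decomposition K V P le M" and "sm P M x y" "mle P le M y z"
  shows "mle P le M x z"
proof -
  from assms(2) obtain p where a: "p\<in>P" "x\<in>M p" "y\<in>M p" unfolding sm_def by blast
  from assms(3) obtain q2 r where b: "q2\<in>P" "r\<in>P" "y\<in>M q2" "z\<in>M r" "le q2 r" unfolding mle_def by blast
  have "p = q2" using md_disj[OF md] a b by blast
  thus ?thesis unfolding mle_def using a b by blast
qed

lemma mle_sm: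
  assumes md: "morse_decomposition K V P le M" and "mle P le M x y" "sm P M z y"
  shows "mle P le M x z"
proof -
  from assms(3) obtain p where a: "p\<in>P" "z\<in>M p" "y\<in>M p" unfolding sm_def by blast
  from assms(2) obtain q2 r where b: "q2\<in>P" "r\<in>P" "x\<in>M q2" "y\<in>M r" "le q2 r" unfolding mle_def by blast
  have "p = r" using md_disj[OF md] a b by blast
  thus ?thesis unfolding mle_def using a b by blast
qed

lemma sm_sym: "sm P M x y \<Longrightarrow> sm P M y x"
  unfolding sm_def by blast

lemma sm_trans:
  assumes md: "morse_decomposition K V P le M" and "sm P M x y" "sm P M y z"
  shows "sm P M x z"
proof -
  from assms(2) obtain p where a: "p\<in>P" "x\<in>M p" "y\<in>M p" unfolding sm_def by blast
  from assms(3) obtain q where b: "q\<in>P" "y\<in>M q" "z\<in>M q" unfolding sm_def by blast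
  have "p = q" using md_disj[OF md] a b by blast
  thus ?thesis unfolding sm_def using a b by blast
qed

lemma face_mle:
  assumes md: "morse_decomposition K V P le M" and "x\<in>K" "y\<in>K" "x \<subseteq> y"
  shows "mle P le M x y"
proof -
  have path: "is_path K V [y,x]" unfolding is_path_def in_F_def using assms(2-4)
    by (auto simp: less_Suc_eq)
  have U: "(\<Union>p\<in>P. M p) = K" using md unfolding morse_decomposition_def by blast
  obtain p where p: "p\<in>P" "y\<in>M p" using U assms(3) by blast
  obtain q where q: "q\<in>P" "x\<in>M q" using U assms(2) by blast
  have "\<forall>p\<in>P. \<forall>q\<in>P. \<forall>ps. is_path K V ps \<and> hd ps \<in> M p \<and> last ps \<in> M q \<longrightarrow> le q p"
    using md unfolding morse_decomposition_def by blast
  from this[rule_format, of p q "[y,x]"] have "le q p" using p q path by simp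
  thus ?thesis unfolding mle_def using p q by blast
qed

lemma adm_order:
  assumes md: "morse_decomposition K V P le M" and ad: "admissible_enum K P le M es"
    and "a < length es" "b < length es" "mle P le M (es!a) (es!b)" "\<not> sm P M (es!a) (es!b)"
  shows "a < b"
proof (rule ccontr)
  assume "\<not> a < b" hence ba: "b \<le> a" by simp
  obtain p q where pq: "p\<in>P" "q\<in>P" "es!a\<in>M p" "es!b\<in>M q" "le p q" using assms(5) unfolding mle_def by blast
  obtain lin where lin: "linear_extension P le lin"
    "\<forall>i<length es. \<forall>j<length es. \<forall>p\<in>P. \<forall>q\<in>P. i \<le> j \<and> es ! i \<in> M p \<and> es ! j \<in> M q \<longrightarrow> lin p q"
    using ad unfolding admissible_enum_def by blast
  have "lin q p" using lin(2) assms(3,4) ba pq by blast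
  moreover have "lin p q" using lin(1) pq unfolding linear_extension_def by blast
  ultimately have "p = q" using lin(1) pq unfolding linear_extension_def partial_order_pred_def by blast
  thus False using assms(6) pq unfolding sm_def by blast
qed

lemma low_props:
  assumes "nonzero_col n A c"
  shows "low n A c < n \<and> A (low n A c) c \<and> (\<forall>r<n. A r c \<longrightarrow> r \<le> low n A c)"
proof -
  have f: "finite {i. i < n \<and> A i c}" by simp
  have ne: "{i. i < n \<and> A i c} \<noteq> {}" using assms unfolding nonzero_col_def by blast
  show ?thesis using Max_in[OF f ne] Max_ge[OF f] unfolding low_def by auto
qed

lemma hom_cong:
  assumes "\<forall>r<length es. A r s = A' r s"
  shows "homogeneous P M es A s = homogeneous P M es A' s \<and> low (length es) A s = low (length es) A' s"
proof -
  have e: "{i. i < length es \<and> A i s} = {i. i < length es \<and> A' i s}" using assms by auto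
  have l: "low (length es) A s = low (length es) A' s" unfolding low_def using e by simp
  have "nonzero_col (length es) A s = nonzero_col (length es) A' s" unfolding nonzero_col_def using assms by auto
  thus ?thesis using l unfolding homogeneous_def by simp
qed

lemma odd_card_symdiff:
  assumes "finite A" "finite B"
  shows "odd (card ((A - B) \<union> (B - A))) = (odd (card A) \<noteq> odd (card B))"
proof -
  have 1: "card ((A - B) \<union> (B - A)) = card (A - B) + card (B - A)"
    by (rule card_Un_disjoint) (use assms in auto)
  have e2: "A = (A - B) \<union> (A \<inter> B)" by blast
  have 2: "card A = card (A - B) + card (A \<inter> B)"
    by (subst e2, rule card_Un_disjoint) (use assms in auto)
  have e3: "B = (B - A) \<union> (A \<inter> B)" by blast
  have 3: "card B = card (B - A) + card (A \<inter> B)"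
    by (subst e3, rule card_Un_disjoint) (use assms in auto)
  have p: "\<And>a b c::nat. odd (a+b) = (odd (a+c) \<noteq> odd (b+c))" by presburger
  show ?thesis using p[of "card (A-B)" "card (B-A)" "card (A\<inter>B)"] 1 2 3 by simp
qed

lemma odd_card_symdiff_filter:
  assumes "finite S" "finite T"
  shows "odd (card {s\<in>(S - T) \<union> (T - S). X s}) = (odd (card {s\<in>S. X s}) \<noteq> odd (card {s\<in>T. X s}))"
proof -
  have "{s\<in>(S - T) \<union> (T - S). X s} = ({s\<in>S. X s} - {s\<in>T. X s}) \<union> ({s\<in>T. X s} - {s\<in>S. X s})" by auto
  thus ?thesis using odd_card_symdiff[of "{s\<in>S. X s}" "{s\<in>T. X s}"] assms by simp
qed



definition rinv where
  "rinv P le M es C j i A \<longleftrightarrow> (\<forall>c r. c \<noteq> j \<longrightarrow> A r c = C r c) \<and>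
     (\<exists>S \<subseteq> {s. s<j \<and> homogeneous P M es C s \<and> mle P le M (es!s) (es!j)}.
        \<forall>r<length es. A r j = (C r j \<noteq> odd (card {s\<in>S. C r s}))) \<and>
     (\<forall>r<length es. A r j \<longrightarrow> mle P le M (es!r) (es!j)) \<and>
     (\<forall>r. i \<le> r \<and> r < length es \<longrightarrow>
        \<not> (A r j \<and> (\<exists>s<j. homogeneous P M es C s \<and> low (length es) C s = r)))"

lemma red_rows_inv:
  assumes md: "morse_decomposition K V P le M"
    and supC: "\<forall>s<j. \<forall>r<length es. C r s \<longrightarrow> mle P le M (es!r) (es!s)"
  shows "rinv P le M es C j i A \<Longrightarrow> rinv P le M es C j 0 (red_rows P M es j A i)"
proof (induction i arbitrary: A)
  case 0
  then show ?case by simp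
next
  case (Suc i)
  let ?n = "length es"
  have eqc: "\<forall>c r. c \<noteq> j \<longrightarrow> A r c = C r c" using Suc.prems unfolding rinv_def by blast
  obtain S where S: "S \<subseteq> {s. s<j \<and> homogeneous P M es C s \<and> mle P le M (es!s) (es!j)}"
     "\<forall>r<?n. A r j = (C r j \<noteq> odd (card {s\<in>S. C r s}))"
    using Suc.prems unfolding rinv_def by blast
  have sup: "\<forall>r<?n. A r j \<longrightarrow> mle P le M (es!r) (es!j)" using Suc.prems unfolding rinv_def by blast
  have piv: "\<forall>r. Suc i \<le> r \<and> r < ?n \<longrightarrow>
        \<not> (A r j \<and> (\<exists>s<j. homogeneous P M es C s \<and> low ?n C s = r))"
    using Suc.prems unfolding rinv_def by blast
  have hc: "homogeneous P M es A s = homogeneous P M es C s \<and> low ?n A s = low ?n C s" if "s < j" for s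
  proof -
    have "\<forall>r<?n. A r s = C r s" using eqc that by simp
    thus ?thesis by (rule hom_cong)
  qed
  let ?cond = "A i j \<and> (\<exists>s<j. homogeneous P M es A s \<and> low ?n A s = i)"
  let ?s0 = "LEAST s. s < j \<and> homogeneous P M es A s \<and> low ?n A s = i"
  define A1 where "A1 = (if ?cond then add_col A ?s0 j else A)"
  have rs: "red_rows P M es j A (Suc i) = red_rows P M es j A1 i"
    unfolding A1_def by simp
  have "rinv P le M es C j i A1"
  proof (cases ?cond)
    case False
    have A1: "A1 = A" unfolding A1_def using False by (rule if_not_P)
    have "\<not> (A i j \<and> (\<exists>s<j. homogeneous P M es C s \<and> low ?n C s = i))"
      using False hc by metis
    then have "\<forall>r. i \<le> r \<and> r < ?n \<longrightarrow>
        \<not> (A r j \<and> (\<exists>s<j. homogeneous P M es C s \<and> low ?n C s = r))"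
      using piv by (metis Suc_leI le_neq_implies_less)
    then show ?thesis using Suc.prems A1 unfolding rinv_def by blast
  next
    case True
    have s0: "?s0 < j \<and> homogeneous P M es A ?s0 \<and> low ?n A ?s0 = i"
      using True by (metis (mono_tags, lifting) LeastI_ex)
    define s0 where "s0 = ?s0"
    have s0C: "s0 < j" "homogeneous P M es C s0" "low ?n C s0 = i"
      using s0 hc unfolding s0_def by auto
    have A1: "A1 = add_col A s0 j" unfolding A1_def s0_def using True by (rule if_P)
    have nz: "nonzero_col ?n C s0" using s0C(2) unfolding homogeneous_def by blast
    have lp: "i < ?n" "C i s0" "\<forall>r<?n. C r s0 \<longrightarrow> r \<le> i"
      using low_props[OF nz] s0C(3) by auto
    have smi: "sm P M (es!s0) (es!i)" using s0C(2,3) unfolding homogeneous_def sm_def by blast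
    have mi: "mle P le M (es!i) (es!j)" using sup lp(1) True by blast
    have ms0: "mle P le M (es!s0) (es!j)" using sm_mle[OF md smi mi] .
    have cols: "\<forall>c r. c \<noteq> j \<longrightarrow> A1 r c = C r c" using eqc unfolding A1 add_col_def by simp
    have colj: "\<And>r. A1 r j = (A r j \<noteq> C r s0)"
      unfolding A1 add_col_def using eqc s0C(1) by simp
    define S1 where "S1 = (S - {s0}) \<union> ({s0} - S)"
    have finS: "finite S" using S(1) by (metis (no_types, lifting) finite_nat_set_iff_bounded mem_Collect_eq subset_eq)
    have S1sub: "S1 \<subseteq> {s. s<j \<and> homogeneous P M es C s \<and> mle P le M (es!s) (es!j)}"
      using S(1) s0C ms0 unfolding S1_def by blast
    have par: "\<forall>r<?n. A1 r j = (C r j \<noteq> odd (card {s\<in>S1. C r s}))"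
    proof (intro allI impI)
      fix r assume r: "r < ?n"
      have "odd (card {s\<in>S1. C r s}) = (odd (card {s\<in>S. C r s}) \<noteq> odd (card {s\<in>{s0}. C r s}))"
        unfolding S1_def by (rule odd_card_symdiff_filter) (use finS in auto)
      moreover have "odd (card {s\<in>{s0}. C r s}) = C r s0"
      proof (cases "C r s0")
        case True
        hence "{s\<in>{s0}. C r s} = {s0}" by auto
        hence c1: "card {s\<in>{s0}. C r s} = 1" by simp
        show ?thesis using True by (subst c1) simp
      next
        case False
        hence "{s\<in>{s0}. C r s} = {}" by auto
        hence c0: "card {s\<in>{s0}. C r s} = 0" by (simp only: card.empty)
        show ?thesis using False by (subst c0) simp
      qed
      ultimately show "A1 r j = (C r j \<noteq> odd (card {s\<in>S1. C r s}))"
        using colj S(2) r by auto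
    qed
    have sup1: "\<forall>r<?n. A1 r j \<longrightarrow> mle P le M (es!r) (es!j)"
    proof (intro allI impI)
      fix r assume r: "r < ?n" "A1 r j"
      show "mle P le M (es!r) (es!j)"
      proof (cases "A r j")
        case True then show ?thesis using sup r by blast
      next
        case False
        hence "C r s0" using colj r by simp
        hence "mle P le M (es!r) (es!s0)" using supC s0C(1) r by blast
        thus ?thesis using mle_trans[OF md _ ms0] by blast
      qed
    qed
    have piv1: "\<forall>r. i \<le> r \<and> r < ?n \<longrightarrow>
        \<not> (A1 r j \<and> (\<exists>s<j. homogeneous P M es C s \<and> low ?n C s = r))"
    proof (intro allI impI)
      fix r assume r: "i \<le> r \<and> r < ?n"
      show "\<not> (A1 r j \<and> (\<exists>s<j. homogeneous P M es C s \<and> low ?n C s = r))"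
      proof (cases "r = i")
        case True
        have "A i j" using \<open>?cond\<close> by blast
        hence "\<not> A1 r j" using colj lp(2) True by simp
        then show ?thesis by blast
      next
        case False
        hence "Suc i \<le> r" using r by simp
        moreover have "\<not> C r s0" using lp(3) r False by force
        ultimately show ?thesis using piv colj r by auto
      qed
    qed
    show ?thesis unfolding rinv_def using cols S1sub par sup1 piv1 by blast
  qed
  then show ?case using Suc.IH rs by simp
qed



definition cinv where
  "cinv P le M es k A \<longleftrightarrow>
     (\<forall>c r. k \<le> c \<longrightarrow> A r c = boundary_matrix es r c) \<and>
     (\<forall>c<length es. \<forall>r<length es. A r c \<longrightarrow> mle P le M (es!r) (es!c)) \<and>
     (\<forall>c<k. \<exists>S \<subseteq> {s. s<c \<and> homogeneous P M es A s \<and> mle P le M (es!s) (es!c)}.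
        \<forall>r<length es. A r c = (boundary_matrix es r c \<noteq> odd (card {s\<in>S. A r s}))) \<and>
     (\<forall>c<k. \<forall>r<length es. A r c \<longrightarrow> \<not>(\<exists>s<c. homogeneous P M es A s \<and> low (length es) A s = r))"

lemma cinv_step:
  assumes md: "morse_decomposition K V P le M" and k: "k < length es"
    and ci: "cinv P le M es k A"
  shows "cinv P le M es (Suc k) (red_col P M es A k)"
proof -
  let ?n = "length es"
  let ?B = "boundary_matrix es"
  have I1: "\<forall>c r. k \<le> c \<longrightarrow> A r c = ?B r c" using ci unfolding cinv_def by blast
  have I2: "\<forall>c<?n. \<forall>r<?n. A r c \<longrightarrow> mle P le M (es!r) (es!c)" using ci unfolding cinv_def by blast
  have I3: "\<forall>c<k. \<exists>S \<subseteq> {s. s<c \<and> homogeneous P M es A s \<and> mle P le M (es!s) (es!c)}.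
        \<forall>r<?n. A r c = (?B r c \<noteq> odd (card {s\<in>S. A r s}))" using ci unfolding cinv_def by blast
  have I4: "\<forall>c<k. \<forall>r<?n. A r c \<longrightarrow> \<not>(\<exists>s<c. homogeneous P M es A s \<and> low ?n A s = r)"
    using ci unfolding cinv_def by blast
  show ?thesis
  proof (cases "nonzero_col ?n A k")
    case False
    have A': "red_col P M es A k = A" unfolding red_col_def using False by simp
    have z: "\<forall>r<?n. \<not> A r k" using False unfolding nonzero_col_def by blast
    have c3: "\<forall>c<Suc k. \<exists>S \<subseteq> {s. s<c \<and> homogeneous P M es A s \<and> mle P le M (es!s) (es!c)}.
        \<forall>r<?n. A r c = (?B r c \<noteq> odd (card {s\<in>S. A r s}))"
    proof (intro allI impI)
      fix c assume "c < Suc k"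
      show "\<exists>S \<subseteq> {s. s<c \<and> homogeneous P M es A s \<and> mle P le M (es!s) (es!c)}.
        \<forall>r<?n. A r c = (?B r c \<noteq> odd (card {s\<in>S. A r s}))"
      proof (cases "c = k")
        case True
        show ?thesis by (rule exI[of _ "{}"]) (use I1 True in simp)
      next
        case False
        then show ?thesis using I3 \<open>c < Suc k\<close> by simp
      qed
    qed
    have c4: "\<forall>c<Suc k. \<forall>r<?n. A r c \<longrightarrow> \<not>(\<exists>s<c. homogeneous P M es A s \<and> low ?n A s = r)"
      using I4 z less_Suc_eq by blast
    show ?thesis unfolding A' cinv_def using I1 I2 c3 c4 by simp
  next
    case True
    define A' where "A' = red_col P M es A k"
    have A'd: "A' = red_rows P M es k A (Suc (low ?n A k))" unfolding A'_def red_col_def using True by simp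
    have lp: "\<forall>r<?n. A r k \<longrightarrow> r \<le> low ?n A k" using low_props[OF True] by blast
    have supC: "\<forall>s<k. \<forall>r<?n. A r s \<longrightarrow> mle P le M (es!r) (es!s)" using I2 k by simp
    have r0: "rinv P le M es A k (Suc (low ?n A k)) A"
      unfolding rinv_def
    proof (intro conjI)
      show "\<exists>S \<subseteq> {s. s<k \<and> homogeneous P M es A s \<and> mle P le M (es!s) (es!k)}.
        \<forall>r<?n. A r k = (A r k \<noteq> odd (card {s\<in>S. A r s}))"
        by (rule exI[of _ "{}"]) simp
      show "\<forall>r<?n. A r k \<longrightarrow> mle P le M (es!r) (es!k)" using I2 k by simp
      show "\<forall>r. Suc (low ?n A k) \<le> r \<and> r < ?n \<longrightarrow>
        \<not> (A r k \<and> (\<exists>s<k. homogeneous P M es A s \<and> low ?n A s = r))"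
      proof (intro allI impI)
        fix r assume r: "Suc (low ?n A k) \<le> r \<and> r < ?n"
        hence "\<not> A r k" using lp by (meson not_less_eq_eq)
        thus "\<not> (A r k \<and> (\<exists>s<k. homogeneous P M es A s \<and> low ?n A s = r))" by blast
      qed
    qed simp
    have r1: "rinv P le M es A k 0 A'" unfolding A'd by (rule red_rows_inv[OF md supC r0])
    note r1' = r1[unfolded rinv_def]
    have eqc: "\<forall>c r. c \<noteq> k \<longrightarrow> A' r c = A r c" using conjunct1[OF r1'] by simp
    obtain S where S: "S \<subseteq> {s. s<k \<and> homogeneous P M es A s \<and> mle P le M (es!s) (es!k)}"
        "\<forall>r<?n. A' r k = (A r k \<noteq> odd (card {s\<in>S. A r s}))"
      using conjunct1[OF conjunct2[OF r1']] by (elim exE conjE) (rule that)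
    have supk: "\<forall>r<?n. A' r k \<longrightarrow> mle P le M (es!r) (es!k)" using conjunct1[OF conjunct2[OF conjunct2[OF r1']]] .
    have pivk: "\<forall>r<?n. \<not> (A' r k \<and> (\<exists>s<k. homogeneous P M es A s \<and> low ?n A s = r))"
      using conjunct2[OF conjunct2[OF conjunct2[OF r1']]] by simp
    have hc: "homogeneous P M es A' s = homogeneous P M es A s \<and> low ?n A' s = low ?n A s"
      if "s \<noteq> k" for s
    proof -
      have "\<forall>r<?n. A' r s = A r s" using eqc that by simp
      thus ?thesis by (rule hom_cong)
    qed
    have c1: "\<forall>c r. Suc k \<le> c \<longrightarrow> A' r c = ?B r c" using eqc I1 by simp
    have c2: "\<forall>c<?n. \<forall>r<?n. A' r c \<longrightarrow> mle P le M (es!r) (es!c)"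
    proof (intro allI impI)
      fix c r assume cr: "c < ?n" "r < ?n" "A' r c"
      show "mle P le M (es!r) (es!c)"
      proof (cases "c = k")
        case True then show ?thesis using supk cr by blast
      next
        case False then show ?thesis using I2 eqc cr by auto
      qed
    qed
    have c3: "\<forall>c<Suc k. \<exists>S \<subseteq> {s. s<c \<and> homogeneous P M es A' s \<and> mle P le M (es!s) (es!c)}.
        \<forall>r<?n. A' r c = (?B r c \<noteq> odd (card {s\<in>S. A' r s}))"
    proof (intro allI impI)
      fix c assume c: "c < Suc k"
      obtain T where T: "T \<subseteq> {s. s<c \<and> homogeneous P M es A s \<and> mle P le M (es!s) (es!c)}"
        "\<forall>r<?n. A' r c = (?B r c \<noteq> odd (card {s\<in>T. A r s}))"
      proof (cases "c = k")
        case True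
        have "\<forall>r<?n. A' r c = (?B r c \<noteq> odd (card {s\<in>S. A r s}))" using S(2) I1 True by simp
        then show ?thesis using that S(1) True by blast
      next
        case False
        hence ck: "c < k" using c by simp
        obtain T where T: "T \<subseteq> {s. s<c \<and> homogeneous P M es A s \<and> mle P le M (es!s) (es!c)}"
          "\<forall>r<?n. A r c = (?B r c \<noteq> odd (card {s\<in>T. A r s}))" using I3 ck by blast
        have "\<forall>r<?n. A' r c = A r c" using eqc False by simp
        then show ?thesis using that T by simp
      qed
      have T': "T \<subseteq> {s. s<c \<and> homogeneous P M es A' s \<and> mle P le M (es!s) (es!c)}"
        using T(1) hc c by fastforce
      have fe: "\<And>r. {s\<in>T. A' r s} = {s\<in>T. A r s}" using T(1) eqc c by fastforce
      have "\<forall>r<?n. A' r c = (?B r c \<noteq> odd (card {s\<in>T. A' r s}))" using T(2) fe by simp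
      thus "\<exists>S \<subseteq> {s. s<c \<and> homogeneous P M es A' s \<and> mle P le M (es!s) (es!c)}.
        \<forall>r<?n. A' r c = (?B r c \<noteq> odd (card {s\<in>S. A' r s}))" using T' by blast
    qed
    have c4: "\<forall>c<Suc k. \<forall>r<?n. A' r c \<longrightarrow> \<not>(\<exists>s<c. homogeneous P M es A' s \<and> low ?n A' s = r)"
    proof (intro allI impI notI)
      fix c r assume c: "c < Suc k" and r: "r < ?n" "A' r c"
        and ex: "\<exists>s<c. homogeneous P M es A' s \<and> low ?n A' s = r"
      then obtain s where s: "s < c" "homogeneous P M es A' s" "low ?n A' s = r" by blast
      have "s \<noteq> k" using s(1) c by simp
      hence s2: "homogeneous P M es A s" "low ?n A s = r" using hc s by auto
      show False
      proof (cases "c = k")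
        case True
        then show ?thesis using pivk r s(1) s2 by blast
      next
        case False
        hence "c < k" "A r c" using c r eqc by auto
        then show ?thesis using I4 r s(1) s2 by blast
      qed
    qed
    have "cinv P le M es (Suc k) A'" unfolding cinv_def by (intro conjI c1 c2 c3 c4)
    thus ?thesis unfolding A'_def .
  qed
qed

lemma cinv_all:
  assumes md: "morse_decomposition K V P le M" and K: "set es = K"
  shows "k \<le> length es \<Longrightarrow> cinv P le M es k (red_cols P M es (boundary_matrix es) k)"
proof (induction k)
  case 0
  have "\<forall>c<length es. \<forall>r<length es. boundary_matrix es r c \<longrightarrow> mle P le M (es!r) (es!c)"
  proof (intro allI impI)
    fix c r assume "c < length es" "r < length es" "boundary_matrix es r c"
    thus "mle P le M (es!r) (es!c)" using face_mle[OF md] K unfolding boundary_matrix_def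
      by (metis nth_mem)
  qed
  then show ?case unfolding cinv_def by simp
next
  case (Suc k)
  then show ?case using cinv_step[OF md] by simp
qed



definition pos :: "'a list \<Rightarrow> 'a \<Rightarrow> nat" where
  "pos xs x = (THE i. i < length xs \<and> xs!i = x)"

lemma pos:
  assumes "distinct xs" "x \<in> set xs"
  shows "pos xs x < length xs \<and> xs!(pos xs x) = x"
proof -
  obtain i where i: "i < length xs" "xs!i = x" using assms(2) by (metis in_set_conv_nth)
  have u: "j = i" if "j < length xs \<and> xs!j = x" for j
  proof -
    have "xs!j = xs!i" using that i by simp
    thus "j = i" using nth_eq_iff_index_eq[OF assms(1)] that i(1) by blast
  qed
  have "pos xs x = i" unfolding pos_def
    by (rule the_equality) (use i u in blast)+
  thus ?thesis using i by simp
qed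

lemma pos_nth:
  assumes "distinct xs" "i < length xs"
  shows "pos xs (xs!i) = i"
proof -
  define k where "k = pos xs (xs!i)"
  have "k < length xs" "xs!k = xs!i" using pos[OF assms(1) nth_mem[OF assms(2)]] unfolding k_def by auto
  hence "k = i" using nth_eq_iff_index_eq[OF assms(1)] assms(2) by blast
  thus ?thesis unfolding k_def .
qed

lemma adm_basic:
  assumes "admissible_enum K P le M es"
  shows "distinct es" "set es = K"
  using conjunct1[OF assms[unfolded admissible_enum_def]]
    conjunct1[OF conjunct2[OF assms[unfolded admissible_enum_def]]] by auto

lemma hom_char:
  assumes md: "morse_decomposition K V P le M" and ad: "admissible_enum K P le M es"
    and c: "c < length es"
    and sup: "\<forall>r<length es. A r c \<longrightarrow> mle P le M (es!r) (es!c)"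
  shows "homogeneous P M es A c \<longleftrightarrow> (\<exists>r<length es. A r c \<and> sm P M (es!r) (es!c))"
proof
  assume h: "homogeneous P M es A c"
  hence nz: "nonzero_col (length es) A c" unfolding homogeneous_def by blast
  have "sm P M (es!(low (length es) A c)) (es!c)" using h unfolding homogeneous_def sm_def by blast
  thus "\<exists>r<length es. A r c \<and> sm P M (es!r) (es!c)" using low_props[OF nz] by blast
next
  assume "\<exists>r<length es. A r c \<and> sm P M (es!r) (es!c)"
  then obtain r where r: "r < length es" "A r c" "sm P M (es!r) (es!c)" by blast
  have nz: "nonzero_col (length es) A c" unfolding nonzero_col_def using r by blast
  define l where "l = low (length es) A c"
  have lp: "l < length es" "A l c" "r \<le> l" using low_props[OF nz] r unfolding l_def by auto
  have m1: "mle P le M (es!l) (es!c)" using sup lp by blast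
  have m2: "mle P le M (es!l) (es!r)" using mle_sm[OF md m1 r(3)] .
  have s: "sm P M (es!l) (es!r)"
  proof (rule ccontr)
    assume "\<not> sm P M (es!l) (es!r)"
    hence "l < r" using adm_order[OF md ad lp(1) r(1) m2] by blast
    thus False using lp(3) by simp
  qed
  have "sm P M (es!c) (es!l)" using sm_sym[OF sm_trans[OF md s r(3)]] .
  thus "homogeneous P M es A c" unfolding homogeneous_def sm_def l_def using nz by blast
qed

lemma order_corr:
  assumes md: "morse_decomposition K V P le M" and ad: "admissible_enum K P le M es"
    and ad': "admissible_enum K P le M es'" and mf: "morse_fixed P M es es'"
    and "a < length es" "b < length es" "a' < length es'" "b' < length es'"
    and "es!a = es'!a'" "es!b = es'!b'" and m: "mle P le M (es!a) (es!b)"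
  shows "a < b \<longleftrightarrow> a' < b'"
proof (cases "sm P M (es!a) (es!b)")
  case True
  then obtain p where pp: "p\<in>P" "es!a \<in> M p" "es!b \<in> M p" unfolding sm_def by blast
  note mf' = mf[unfolded morse_fixed_def, rule_format, of p a b a' b']
  then show ?thesis using mf' pp assms(5-10) by simp
next
  case False
  have "a < b" using adm_order[OF md ad assms(5,6) m False] .
  moreover have "a' < b'" using adm_order[OF md ad' assms(7,8)] m False assms(9,10) by simp
  ultimately show ?thesis by simp
qed

lemma hom_corr:
  assumes md: "morse_decomposition K V P le M" and ad: "admissible_enum K P le M es"
    and ad': "admissible_enum K P le M es'" and mf: "morse_fixed P M es es'"
    and c: "c < length es" "c' < length es'" "es!c = es'!c'"
    and sup: "\<forall>r<length es. A r c \<longrightarrow> mle P le M (es!r) (es!c)"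
    and sup': "\<forall>r<length es'. A' r c' \<longrightarrow> mle P le M (es'!r) (es'!c')"
    and corr: "\<forall>r<length es. \<forall>r'<length es'. es!r = es'!r' \<longrightarrow> A r c = A' r' c'"
  shows "(homogeneous P M es A c \<longleftrightarrow> homogeneous P M es' A' c') \<and>
         (homogeneous P M es A c \<longrightarrow> es!(low (length es) A c) = es'!(low (length es') A' c'))"
proof -
  have st: "set es = K" "set es' = K" using adm_basic(2)[OF ad] adm_basic(2)[OF ad'] by auto
  have to': "\<exists>r'<length es'. es'!r' = es!r" if "r < length es" for r
  proof -
    have "es!r \<in> set es'" using st nth_mem[OF that] by simp
    thus ?thesis by (simp add: in_set_conv_nth)
  qed
  have to: "\<exists>r<length es. es!r = es'!r'" if "r' < length es'" for r'
  proof -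
    have "es'!r' \<in> set es" using st nth_mem[OF that] by simp
    thus ?thesis by (simp add: in_set_conv_nth)
  qed
  have h1: "homogeneous P M es A c \<longleftrightarrow> (\<exists>r<length es. A r c \<and> sm P M (es!r) (es!c))"
    by (rule hom_char[where A=A, OF md ad c(1) sup])
  have h2: "homogeneous P M es' A' c' \<longleftrightarrow> (\<exists>r<length es'. A' r c' \<and> sm P M (es'!r) (es'!c'))"
    by (rule hom_char[where A=A', OF md ad' c(2) sup'])
  have eq: "homogeneous P M es A c \<longleftrightarrow> homogeneous P M es' A' c'"
  proof
    assume "homogeneous P M es A c"
    then obtain r where r: "r<length es" "A r c" "sm P M (es!r) (es!c)" using h1 by blast
    obtain r' where r': "r'<length es'" "es'!r' = es!r" using to' r(1) by blast
    have "A' r' c'" using corr r r' by simp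
    thus "homogeneous P M es' A' c'" using h2 r r' c(3) by auto
  next
    assume "homogeneous P M es' A' c'"
    then obtain r' where r': "r'<length es'" "A' r' c'" "sm P M (es'!r') (es'!c')" using h2 by blast
    obtain r where r: "r<length es" "es!r = es'!r'" using to r'(1) by blast
    have "A r c" using corr r r' by simp
    thus "homogeneous P M es A c" using h1 r r' c(3) by auto
  qed
  moreover have "es!(low (length es) A c) = es'!(low (length es') A' c')"
    if h: "homogeneous P M es A c"
  proof -
    have h': "homogeneous P M es' A' c'" using h eq by simp
    have nz: "nonzero_col (length es) A c" using h unfolding homogeneous_def by blast
    have nz': "nonzero_col (length es') A' c'" using h' unfolding homogeneous_def by blast
    define l where "l = low (length es) A c"
    define l' where "l' = low (length es') A' c'"
    have lp: "l < length es" "A l c" "\<forall>r<length es. A r c \<longrightarrow> r \<le> l" using low_props[OF nz] unfolding l_def by auto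
    have lp': "l' < length es'" "A' l' c'" "\<forall>r<length es'. A' r c' \<longrightarrow> r \<le> l'" using low_props[OF nz'] unfolding l'_def by auto
    obtain l2 where l2: "l2 < length es'" "es'!l2 = es!l" using to' lp(1) by blast
    obtain m where m: "m < length es" "es!m = es'!l'" using to lp'(1) by blast
    have "A' l2 c'" using corr lp l2 by simp
    hence l2l: "l2 \<le> l'" using lp'(3) l2 by blast
    have "A m c" using corr lp' m by simp
    hence ml: "m \<le> l" using lp(3) m by blast
    obtain p where p: "p\<in>P" "es!c \<in> M p" "es!l \<in> M p" using h unfolding homogeneous_def l_def by blast
    obtain p' where p': "p'\<in>P" "es'!c' \<in> M p'" "es'!l' \<in> M p'" using h' unfolding homogeneous_def l'_def by blast
    have "p = p'" using md_disj[OF md p(1) p'(1)] p(2) p'(2) c(3) by simp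
    hence pm: "es!m \<in> M p" using p' m by simp
    have "m = l"
    proof (rule ccontr)
      assume "m \<noteq> l"
      hence "m < l" using ml by simp
      note mf' = mf[unfolded morse_fixed_def, rule_format, of p m l l' l2]
      hence "l' < l2" using mf' p(1) pm p(3) m l2 lp(1) lp'(1) \<open>m < l\<close> by simp
      thus False using l2l by simp
    qed
    thus ?thesis using m unfolding l_def l'_def by simp
  qed
  ultimately show ?thesis by blast
qed



lemma cinv_final:
  assumes md: "morse_decomposition K V P le M" and ad: "admissible_enum K P le M es"
  shows "cinv P le M es (length es) (conmat_reduce P M es)"
  unfolding conmat_reduce_def by (rule cinv_all[OF md adm_basic(2)[OF ad]]) simp

lemma cross:
  assumes md: "morse_decomposition K V P le M" and ad: "admissible_enum K P le M es"
    and ad': "admissible_enum K P le M es'" and mf: "morse_fixed P M es es'"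
  shows "\<forall>j<length es. \<forall>r<length es. conmat_reduce P M es r j =
            conmat_reduce P M es' (pos es' (es!r)) (pos es' (es!j))"
proof -
  define n where "n = length es"
  define R where "R = conmat_reduce P M es"
  define R' where "R' = conmat_reduce P M es'"
  define \<pi> where "\<pi> r = pos es' (es!r)" for r
  have d: "distinct es" "distinct es'" using adm_basic(1)[OF ad] adm_basic(1)[OF ad'] by auto
  have st: "set es = K" "set es' = K" using adm_basic(2)[OF ad] adm_basic(2)[OF ad'] by auto
  have nn: "length es' = n" unfolding n_def using distinct_card[OF d(1)] distinct_card[OF d(2)] st by simp
  have piP: "\<pi> r < n \<and> es'!(\<pi> r) = es!r" if "r < n" for r
  proof -
    have "es!r \<in> set es'" using st nth_mem[of r es] that unfolding n_def by simp
    thus ?thesis using pos[OF d(2)] nn unfolding \<pi>_def by metis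
  qed
  have piU: "r' = \<pi> r" if "r < n" "r' < n" "es'!r' = es!r" for r r'
    using pos_nth[OF d(2), of r'] that nn unfolding \<pi>_def by simp
  have piI: "\<exists>r<n. \<pi> r = r'" if "r' < n" for r'
  proof -
    have "es'!r' \<in> set es" using st nth_mem[of r' es'] that nn by simp
    hence "pos es (es'!r') < n" "es!(pos es (es'!r')) = es'!r'" using pos[OF d(1)] unfolding n_def by auto
    thus ?thesis using piU that by metis
  qed
  have ci: "cinv P le M es n R" unfolding R_def n_def by (rule cinv_final[OF md ad])
  have ci': "cinv P le M es' n R'" unfolding R'_def nn[symmetric] by (rule cinv_final[OF md ad'])
  note c1 = ci[unfolded cinv_def] and c2 = ci'[unfolded cinv_def]
  have supR: "\<forall>c<n. \<forall>r<n. R r c \<longrightarrow> mle P le M (es!r) (es!c)" using conjunct1[OF conjunct2[OF c1]] unfolding n_def .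
  have supR': "\<forall>c<n. \<forall>r<n. R' r c \<longrightarrow> mle P le M (es'!r) (es'!c)" using conjunct1[OF conjunct2[OF c2]] nn by simp
  have I3: "\<forall>c<n. \<exists>S \<subseteq> {s. s<c \<and> homogeneous P M es R s \<and> mle P le M (es!s) (es!c)}.
        \<forall>r<n. R r c = (boundary_matrix es r c \<noteq> odd (card {s\<in>S. R r s}))"
    using conjunct1[OF conjunct2[OF conjunct2[OF c1]]] unfolding n_def .
  have I3': "\<forall>c<n. \<exists>S \<subseteq> {s. s<c \<and> homogeneous P M es' R' s \<and> mle P le M (es'!s) (es'!c)}.
        \<forall>r<n. R' r c = (boundary_matrix es' r c \<noteq> odd (card {s\<in>S. R' r s}))"
    using conjunct1[OF conjunct2[OF conjunct2[OF c2]]] nn by simp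
  have I4: "\<forall>c<n. \<forall>r<n. R r c \<longrightarrow> \<not>(\<exists>s<c. homogeneous P M es R s \<and> low n R s = r)"
    using conjunct2[OF conjunct2[OF conjunct2[OF c1]]] unfolding n_def .
  have I4': "\<forall>c<n. \<forall>r<n. R' r c \<longrightarrow> \<not>(\<exists>s<c. homogeneous P M es' R' s \<and> low n R' s = r)"
    using conjunct2[OF conjunct2[OF conjunct2[OF c2]]] nn by simp
  have oc: "a < b \<longleftrightarrow> \<pi> a < \<pi> b" if "a < n" "b < n" "mle P le M (es!a) (es!b)" for a b
    using order_corr[OF md ad ad' mf, of a b "\<pi> a" "\<pi> b"] that piP nn unfolding n_def by simp
  have main: "\<forall>r<n. R r j = R' (\<pi> r) (\<pi> j)" if "j < n" for j
    using that
  proof (induction j rule: less_induct)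
    case (less j)
    have corr: "\<forall>r<n. \<forall>r'<n. es!r = es'!r' \<longrightarrow> R r s = R' r' (\<pi> s)" if "s < j" for s
      using less.IH[OF that] that less.prems piU by (metis order.strict_trans)
    have homc: "(homogeneous P M es R s \<longleftrightarrow> homogeneous P M es' R' (\<pi> s)) \<and>
         (homogeneous P M es R s \<longrightarrow> es!(low n R s) = es'!(low n R' (\<pi> s)))" if "s < j" for s
    proof -
      have sn: "s < n" using that less.prems by simp
      have s1: "\<forall>r<n. R' r (\<pi> s) \<longrightarrow> mle P le M (es'!r) (es!s)"
        using supR' piP[OF sn] by metis
      show ?thesis
        using hom_corr[OF md ad ad' mf, of s "\<pi> s" R R'] sn piP[OF sn] supR s1 corr[OF that] nn
        unfolding n_def by simp
    qed
    obtain S where S: "S \<subseteq> {s. s<j \<and> homogeneous P M es R s \<and> mle P le M (es!s) (es!j)}"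
        "\<forall>r<n. R r j = (boundary_matrix es r j \<noteq> odd (card {s\<in>S. R r s}))"
      using I3 less.prems by blast
    have pj: "\<pi> j < n" "es'!(\<pi> j) = es!j" using piP less.prems by auto
    obtain S' where S': "S' \<subseteq> {s. s<\<pi> j \<and> homogeneous P M es' R' s \<and> mle P le M (es'!s) (es'!(\<pi> j))}"
        "\<forall>r<n. R' r (\<pi> j) = (boundary_matrix es' r (\<pi> j) \<noteq> odd (card {s\<in>S'. R' r s}))"
      using I3' pj(1) by blast
    define S2 where "S2 = {s. s < n \<and> \<pi> s \<in> S'}"
    have S2p: "s < j \<and> homogeneous P M es R s \<and> mle P le M (es!s) (es!j)" if "s \<in> S2" for s
    proof -
      have sn: "s < n" "\<pi> s \<in> S'" using that unfolding S2_def by auto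
      have a: "\<pi> s < \<pi> j" "homogeneous P M es' R' (\<pi> s)" "mle P le M (es'!(\<pi> s)) (es'!(\<pi> j))"
        using S'(1) sn(2) by auto
      have m: "mle P le M (es!s) (es!j)" using a(3) piP[OF sn(1)] pj by simp
      have "s < j" using oc[OF sn(1) less.prems m] a(1) by simp
      thus ?thesis using homc a(2) m by simp
    qed
    have finS: "finite S" using S(1) by (metis (no_types, lifting) finite_nat_set_iff_bounded mem_Collect_eq subset_eq)
    have finS2: "finite S2" unfolding S2_def by simp
    have injpi: "inj_on \<pi> {..<n}"
    proof (rule inj_onI)
      fix a b assume "a \<in> {..<n}" "b \<in> {..<n}" "\<pi> a = \<pi> b"
      hence ab: "a < n" "b < n" "\<pi> a = \<pi> b" by auto
      have "es!a = es'!(\<pi> a)" using piP[OF ab(1)] by simp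
      also have "\<dots> = es!b" using piP[OF ab(2)] ab(3) by simp
      finally have "es!a = es!b" .
      note this ab
      thus "a = b" using nth_eq_iff_index_eq[OF d(1)] unfolding n_def by blast
    qed
    have cardeq: "card {s\<in>S'. R' (\<pi> r) s} = card {s\<in>S2. R r s}" if r: "r < n" for r
    proof -
      have "{s\<in>S'. R' (\<pi> r) s} = \<pi> ` {s\<in>S2. R r s}"
      proof
        show "{s\<in>S'. R' (\<pi> r) s} \<subseteq> \<pi> ` {s\<in>S2. R r s}"
        proof
          fix s' assume s': "s' \<in> {s\<in>S'. R' (\<pi> r) s}"
          have "s' < n" using s' S'(1) pj(1) by auto
          then obtain s where s: "s < n" "\<pi> s = s'" using piI by blast
          have sS2: "s \<in> S2" unfolding S2_def using s s' by simp
          have "s < j" using S2p[OF sS2] by simp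
          hence "R r s" using less.IH[of s] less.prems r s s' by auto
          thus "s' \<in> \<pi> ` {s\<in>S2. R r s}" using sS2 s by blast
        qed
        show "\<pi> ` {s\<in>S2. R r s} \<subseteq> {s\<in>S'. R' (\<pi> r) s}"
        proof
          fix s' assume "s' \<in> \<pi> ` {s\<in>S2. R r s}"
          then obtain s where s: "s \<in> S2" "R r s" "s' = \<pi> s" by blast
          have "s < j" using S2p[OF s(1)] by simp
          hence "R' (\<pi> r) (\<pi> s)" using less.IH[of s] less.prems r s(2) by auto
          thus "s' \<in> {s\<in>S'. R' (\<pi> r) s}" using s unfolding S2_def by simp
        qed
      qed
      moreover have "inj_on \<pi> {s\<in>S2. R r s}" using injpi by (rule inj_on_subset) (auto simp: S2_def)
      ultimately show ?thesis by (simp add: card_image)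
    qed
    have Beq: "boundary_matrix es' (\<pi> r) (\<pi> j) = boundary_matrix es r j" if "r < n" for r
      using piP[OF that] pj less.prems that nn unfolding boundary_matrix_def n_def by simp
    define T where "T = (S - S2) \<union> (S2 - S)"
    have diff: "(R r j \<noteq> R' (\<pi> r) (\<pi> j)) = odd (card {s\<in>T. R r s})" if r: "r < n" for r
    proof -
      have "R' (\<pi> r) (\<pi> j) = (boundary_matrix es r j \<noteq> odd (card {s\<in>S2. R r s}))"
        using S'(2) piP[OF r] Beq[OF r] cardeq[OF r] by simp
      moreover have "odd (card {s\<in>T. R r s}) = (odd (card {s\<in>S. R r s}) \<noteq> odd (card {s\<in>S2. R r s}))"
        unfolding T_def by (rule odd_card_symdiff_filter[OF finS finS2])
      ultimately show ?thesis using S(2) r by auto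
    qed
    have Tp: "t < j \<and> homogeneous P M es R t \<and> mle P le M (es!t) (es!j)" if "t \<in> T" for t
      using that S(1) S2p unfolding T_def by blast
    have T0: "T = {}"
    proof (rule ccontr)
      assume ne: "T \<noteq> {}"
      have finT: "finite T" unfolding T_def using finS finS2 by simp
      have fi: "finite (low n R ` T)" using finT by simp
      have nei: "low n R ` T \<noteq> {}" using ne by simp
      obtain t where t: "t \<in> T" "low n R t = Max (low n R ` T)" using Max_in[OF fi nei] by auto
      have tmax: "low n R s \<le> low n R t" if "s \<in> T" for s using Max_ge[OF fi] that t(2) by simp
      have tp: "t < j" "homogeneous P M es R t" "mle P le M (es!t) (es!j)" using Tp[OF t(1)] by auto
      have tn: "t < n" using tp(1) less.prems by simp
      define l where "l = low n R t"
      have nzt: "nonzero_col n R t" using tp(2) unfolding homogeneous_def n_def by blast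
      have lp: "l < n" "R l t" using low_props[OF nzt] unfolding l_def by auto
      have one: "{s\<in>T. R l s} = {t}"
      proof
        show "{t} \<subseteq> {s\<in>T. R l s}" using t(1) lp by simp
        show "{s\<in>T. R l s} \<subseteq> {t}"
        proof
          fix s assume s: "s \<in> {s\<in>T. R l s}"
          have sp: "s < j" "homogeneous P M es R s" using Tp s by auto
          have sn: "s < n" using sp(1) less.prems by simp
          have nzs: "nonzero_col n R s" using sp(2) unfolding homogeneous_def n_def by blast
          have "l \<le> low n R s" using low_props[OF nzs] s lp(1) by auto
          moreover have "low n R s \<le> l" using tmax s unfolding l_def by simp
          ultimately have ls: "low n R s = l" by simp
          show "s \<in> {t}"
          proof (rule ccontr)
            assume "s \<notin> {t}"
            hence "s < t \<or> t < s" by auto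
            thus False
            proof
              assume "s < t"
              thus False using I4 tn lp sp(2) ls by blast
            next
              assume "t < s"
              thus False using I4 sn lp s tp(2) unfolding l_def by blast
            qed
          qed
        qed
      qed
      have "R l j \<noteq> R' (\<pi> l) (\<pi> j)" using diff[OF lp(1)] one by simp
      thus False
      proof (cases "R l j")
        case True
        thus False using I4 less.prems lp(1) tp(1,2) unfolding l_def by blast
      next
        case False
        hence R'l: "R' (\<pi> l) (\<pi> j)" using \<open>R l j \<noteq> R' (\<pi> l) (\<pi> j)\<close> by simp
        have pt: "\<pi> t < \<pi> j" using oc[OF tn less.prems tp(3)] tp(1) by simp
        have h': "homogeneous P M es' R' (\<pi> t)" and le': "es!l = es'!(low n R' (\<pi> t))"
          using homc[OF tp(1)] tp(2) unfolding l_def by auto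
        have nz': "nonzero_col n R' (\<pi> t)" using h' nn unfolding homogeneous_def by simp
        have "low n R' (\<pi> t) < n" using low_props[OF nz'] by simp
        hence "low n R' (\<pi> t) = \<pi> l" using piU[OF lp(1)] le' by simp
        thus False using I4' pj(1) piP[OF lp(1)] R'l pt h' by blast
      qed
    qed
    show ?case
    proof (intro allI impI)
      fix r assume r: "r < n"
      have e: "{s\<in>T. R r s} = {}" using T0 by simp
      show "R r j = R' (\<pi> r) (\<pi> j)" using diff[OF r] unfolding e by simp
    qed
  qed
  show ?thesis using main unfolding n_def R_def R'_def \<pi>_def by blast
qed



theorem proposition6:
  fixes K :: "'v set set" and V :: "'v set set set"
    and P :: "'p set" and le :: "'p \<Rightarrow> 'p \<Rightarrow> bool" and M :: "'p \<Rightarrow> 'v set set"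
    and es es' :: "'v set list"
  assumes "simplicial_complex K"
    and "multivector_field K V"
    and "morse_decomposition K V P le M"
    and "admissible_enum K P le M es"
    and "admissible_enum K P le M es'"
    and "morse_fixed P M es es'"
  shows "(\<forall>i<length es. \<forall>j<length es. \<forall>i'<length es'. \<forall>j'<length es'.
            es ! i = es' ! i' \<and> es ! j = es' ! j' \<longrightarrow>
            conmat_reduce P M es i j = conmat_reduce P M es' i' j')
       \<and> (\<forall>j<length es. \<forall>l<length es. \<forall>j'<length es'. \<forall>l'<length es'.
            homogeneous P M es (conmat_reduce P M es) j \<and>
            low (length es) (conmat_reduce P M es) j = l \<and>
            es' ! j' = es ! j \<and> es' ! l' = es ! l \<longrightarrow>
            homogeneous P M es' (conmat_reduce P M es') j' \<and>
            low (length es') (conmat_reduce P M es') j' = l')"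
proof -
  note md = assms(3) and ad = assms(4) and ad' = assms(5) and mf = assms(6)
  define R where "R = conmat_reduce P M es"
  define R' where "R' = conmat_reduce P M es'"
  have d: "distinct es" "distinct es'" using adm_basic(1)[OF ad] adm_basic(1)[OF ad'] by auto
  have cr: "\<forall>j<length es. \<forall>r<length es. R r j = R' (pos es' (es!r)) (pos es' (es!j))"
    using cross[OF md ad ad' mf] unfolding R_def R'_def .
  have pe: "pos es' (es!r) = r'" if "r' < length es'" "es!r = es'!r'" for r r'
    using pos_nth[OF d(2) that(1)] that(2) by simp
  have part1: "\<forall>i<length es. \<forall>j<length es. \<forall>i'<length es'. \<forall>j'<length es'.
            es ! i = es' ! i' \<and> es ! j = es' ! j' \<longrightarrow> R i j = R' i' j'"
  proof (intro allI impI)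
    fix i j i' j' assume a: "i < length es" "j < length es" "i' < length es'" "j' < length es'"
      "es ! i = es' ! i' \<and> es ! j = es' ! j'"
    have "pos es' (es!i) = i'" "pos es' (es!j) = j'" using pe a by auto
    thus "R i j = R' i' j'" using cr a by metis
  qed
  have part2: "\<forall>j<length es. \<forall>l<length es. \<forall>j'<length es'. \<forall>l'<length es'.
            homogeneous P M es R j \<and> low (length es) R j = l \<and>
            es' ! j' = es ! j \<and> es' ! l' = es ! l \<longrightarrow>
            homogeneous P M es' R' j' \<and> low (length es') R' j' = l'"
  proof (intro allI impI)
    fix j l j' l' assume a: "j < length es" "l < length es" "j' < length es'" "l' < length es'"
      "homogeneous P M es R j \<and> low (length es) R j = l \<and> es' ! j' = es ! j \<and> es' ! l' = es ! l"
    have ci: "cinv P le M es (length es) R" unfolding R_def by (rule cinv_final[OF md ad])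
    have ci': "cinv P le M es' (length es') R'" unfolding R'_def by (rule cinv_final[OF md ad'])
    have sup: "\<forall>r<length es. R r j \<longrightarrow> mle P le M (es!r) (es!j)"
      using conjunct1[OF conjunct2[OF ci[unfolded cinv_def]]] a(1) by blast
    have sup': "\<forall>r<length es'. R' r j' \<longrightarrow> mle P le M (es'!r) (es'!j')"
      using conjunct1[OF conjunct2[OF ci'[unfolded cinv_def]]] a(3) by blast
    have corr: "\<forall>r<length es. \<forall>r'<length es'. es!r = es'!r' \<longrightarrow> R r j = R' r' j'"
      using part1 a by blast
    have hc: "(homogeneous P M es R j \<longleftrightarrow> homogeneous P M es' R' j') \<and>
         (homogeneous P M es R j \<longrightarrow> es!(low (length es) R j) = es'!(low (length es') R' j'))"
    proof -
      have e: "es!j = es'!j'" using a by simp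
      show ?thesis by (rule hom_corr[where A=R and A'=R', OF md ad ad' mf a(1) a(3) e sup sup' corr])
    qed
    have h': "homogeneous P M es' R' j'" using hc a by blast
    have nz: "nonzero_col (length es') R' j'" using h' unfolding homogeneous_def by blast
    have ln: "low (length es') R' j' < length es'" using low_props[OF nz] by blast
    have "es'!(low (length es') R' j') = es'!l'" using hc a by auto
    hence "low (length es') R' j' = l'" using nth_eq_iff_index_eq[OF d(2) ln a(4)] by blast
    thus "homogeneous P M es' R' j' \<and> low (length es') R' j' = l'" using h' by blast
  qed
  show ?thesis using part1 part2 unfolding R_def R'_def by blast
qed


end
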